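(* Let $X$ be a Hausdorff topological space and let $f:X\to X$ be a continuous weak topological contraction. Then $f$ has a unique fixed point.
   Context: A mapping $f:X\to X$ (not necessarily continuous or closed) is a weak topological contraction if for every open cover $\mathcal{U}$ of $X$ and every pair of points $x,y\in X$ there exist $n\in\mathbb{N}_0=\{0,1,2,\dots\}$ and $U\in\mathcal{U}$ such that $f^n[\{x,y\}]\subseteq U$, where $f^n$ is the $n$-fold iterate of $f$ and $f^0$ is the identity. *)

theory Defs
  imports "HOL-Analysis.Analysis"
begin

definition weak_top_contraction :: "'a topology \<Rightarrow> ('a \<Rightarrow> 'a) \<Rightarrow> bool" where
  "weak_top_contraction T f \<longleftrightarrow>
     f \<in> topspace T \<rightarrow> topspace T \<and>
     (\<forall>\<U>. (\<forall>U\<in>\<U>. openin T U) \<and> topspace T \<subseteq> \<Union>\<U> \<longrightarrow>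
        (\<forall>x\<in>topspace T. \<forall>y\<in>topspace T.
           \<exists>n::nat. \<exists>U\<in>\<U>. (f ^^ n) ` {x, y} \<subseteq> U))"

end

theory Submission
  imports Defs
begin

theorem theorem2:
  fixes T :: "'a topology" and f :: "'a \<Rightarrow> 'a"
  assumes "topspace T \<noteq> {}"
    and "Hausdorff_space T"
    and "continuous_map T T f"
    and "weak_top_contraction T f"
  shows "\<exists>!x. x \<in> topspace T \<and> f x = x"
proof -
  have fX: "f \<in> topspace T \<rightarrow> topspace T"
   and C: "\<And>\<U>. (\<forall>U\<in>\<U>. openin T U) \<Longrightarrow> topspace T \<subseteq> \<Union>\<U> \<Longrightarrow>
        (\<forall>x\<in>topspace T. \<forall>y\<in>topspace T. \<exists>n::nat. \<exists>U\<in>\<U>. (f ^^ n) ` {x, y} \<subseteq> U)"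
    using assms(4) unfolding weak_top_contraction_def by blast+
  have ex: "\<exists>x. x \<in> topspace T \<and> f x = x"
  proof (rule ccontr)
    assume nf: "\<not> ?thesis"
    have loc: "\<exists>W. openin T W \<and> z \<in> W \<and> (\<forall>w\<in>W. f w \<notin> W)" if z: "z \<in> topspace T" for z
    proof -
      have fz: "f z \<in> topspace T" using fX z by blast
      have "z \<noteq> f z" using nf z by metis
      then obtain U V where UV: "openin T U" "openin T V" "z \<in> U" "f z \<in> V" "disjnt U V"
        using assms(2) z fz unfolding Hausdorff_space_def by metis
      define W where "W = {x \<in> topspace T. f x \<in> V} \<inter> U"
      have "openin T {x \<in> topspace T. f x \<in> V}"
        using assms(3) UV(2) by (simp add: continuous_map_def)
      hence "openin T W" using UV(1) W_def by auto
      moreover have "z \<in> W" using UV z W_def by auto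
      moreover have "\<forall>w\<in>W. f w \<notin> W" using UV(5) W_def by (auto simp: disjnt_iff)
      ultimately show ?thesis by blast
    qed
    define \<U> where "\<U> = {W. openin T W \<and> (\<forall>w\<in>W. f w \<notin> W)}"
    have "topspace T \<subseteq> \<Union>\<U>" using loc unfolding \<U>_def by blast
    moreover have "\<forall>U\<in>\<U>. openin T U" unfolding \<U>_def by blast
    moreover obtain x where x: "x \<in> topspace T" using assms(1) by blast
    moreover have "f x \<in> topspace T" using fX x by blast
    ultimately obtain n U where "U \<in> \<U>" "(f ^^ n) ` {x, f x} \<subseteq> U"
      using C by meson
    hence "(f ^^ n) x \<in> U" "f ((f ^^ n) x) \<in> U" "\<forall>w\<in>U. f w \<notin> U"
      by (auto simp: \<U>_def funpow_swap1)
    thus False by blast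
  qed
  have un: "x = y" if x: "x \<in> topspace T" "f x = x" and y: "y \<in> topspace T" "f y = y" for x y
  proof (rule ccontr)
    assume "x \<noteq> y"
    then obtain U V where UV: "openin T U" "openin T V" "x \<in> U" "y \<in> V" "disjnt U V"
      using assms(2) x y unfolding Hausdorff_space_def by metis
    have "closedin T {x, y}"
      using Hausdorff_imp_t1_space[OF assms(2)] x y by (simp add: t1_space_closedin_finite)
    hence o: "openin T (topspace T - {x, y})" by (simp add: openin_diff)
    define \<U> where "\<U> = {U, V, topspace T - {x, y}}"
    have "\<forall>U\<in>\<U>. openin T U" using UV o \<U>_def by auto
    moreover have "topspace T \<subseteq> \<Union>\<U>" using UV \<U>_def by auto
    ultimately obtain n W where W: "W \<in> \<U>" "(f ^^ n) ` {x, y} \<subseteq> W"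
      using C x y by meson
    have "(f ^^ n) x = x" using x(2) by (induction n) auto
    moreover have "(f ^^ n) y = y" using y(2) by (induction n) auto
    ultimately have "x \<in> W" "y \<in> W" using W by auto
    thus False using W(1) UV \<U>_def by (auto simp: disjnt_iff)
  qed
  show ?thesis using ex un by blast
qed

end
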